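(* Let $X$ be a pure simplicial complex of dimension $d$ with $n\ge1$ facets and $v$ vertices. Then $X$ is stacked if and only if $v=n+d$ and for every pair of facets $f,f'$ of $X$ (including $f=f'$) there is a unique path from $f$ to $f'$.
   Context: A simplicial complex $X$ on a finite vertex set $V$ is a family of subsets (faces) of $V$ closed under taking subsets, every element of $V$ lying in some face; facets are inclusion-maximal faces. $X$ is pure of dimension $d$ if every facet has $d+1$ elements; a codimension one face is a face with $d$ elements. $X$ is stacked if it is pure of some dimension $d$ and its facets can be ordered $F_0,F_1,\dots,F_k$ (a stacking order) such that for each $p\ge 1$, $F_p$ contains exactly one vertex $v_p$ not in $F_0\cup\dots\cup F_{p-1}$ (called the free vertex of $F_p$), and $F_p\setminus\{v_p\}\subseteq F_j$ for some $j<p$. A walk is a sequence of facets $f_1,\dots,f_p$ ($p\ge 1$) such that each $f_i\cap f_{i+1}$ has exactly $d$ elements; a path is a walk in which the faces $f_i\cap f_{i+1}$, $1\le i<p$, are pairwise distinct; it is a path from $f_1$ to $f_p$. (The one-term sequence $f$ is a path from $f$ to $f$.) *)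

theory Defs
  imports Main
begin

definition simplicial_complex :: "'a set \<Rightarrow> 'a set set \<Rightarrow> bool" where
  "simplicial_complex V X \<longleftrightarrow> finite V \<and> (\<forall>F\<in>X. F \<subseteq> V)
     \<and> (\<forall>F\<in>X. \<forall>G. G \<subseteq> F \<longrightarrow> G \<in> X) \<and> (\<forall>x\<in>V. \<exists>F\<in>X. x \<in> F)"

definition facets :: "'a set set \<Rightarrow> 'a set set" where
  "facets X = {F \<in> X. \<forall>G\<in>X. F \<subseteq> G \<longrightarrow> G = F}"

definition pure :: "'a set set \<Rightarrow> nat \<Rightarrow> bool" where
  "pure X d \<longleftrightarrow> (\<forall>F\<in>facets X. card F = d + 1)"

definition stacking_order :: "'a set set \<Rightarrow> 'a set list \<Rightarrow> bool" where
  "stacking_order X Fs \<longleftrightarrow> Fs \<noteq> [] \<and> distinct Fs \<and> set Fs = facets X \<and>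
     (\<forall>p. 0 < p \<and> p < length Fs \<longrightarrow>
        (\<exists>v. Fs ! p - \<Union>(set (take p Fs)) = {v} \<and> (\<exists>j<p. Fs ! p - {v} \<subseteq> Fs ! j)))"

definition stacked :: "'a set set \<Rightarrow> bool" where
  "stacked X \<longleftrightarrow> (\<exists>d. pure X d) \<and> (\<exists>Fs. stacking_order X Fs)"

definition walk :: "'a set set \<Rightarrow> nat \<Rightarrow> 'a set list \<Rightarrow> bool" where
  "walk X d fs \<longleftrightarrow> fs \<noteq> [] \<and> set fs \<subseteq> facets X \<and>
     (\<forall>i. Suc i < length fs \<longrightarrow> card (fs ! i \<inter> fs ! Suc i) = d)"

definition path :: "'a set set \<Rightarrow> nat \<Rightarrow> 'a set list \<Rightarrow> bool" where
  "path X d fs \<longleftrightarrow> walk X d fs \<and>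
     distinct (map (\<lambda>i. fs ! i \<inter> fs ! Suc i) [0..<length fs - 1])"

definition path_from :: "'a set set \<Rightarrow> nat \<Rightarrow> 'a set list \<Rightarrow> 'a set \<Rightarrow> 'a set \<Rightarrow> bool" where
  "path_from X d fs f f' \<longleftrightarrow> path X d fs \<and> hd fs = f \<and> last fs = f'"

end

theory Submission imports Defs begin

fun rd :: "'a set list \<Rightarrow> 'a set list" where
  "rd (a # b # xs) = (a \<inter> b) # rd (b # xs)"
| "rd _ = []"

lemma rd_map: "map (\<lambda>i. fs!i \<inter> fs!Suc i) [0..<length fs - 1] = rd fs"
proof (induction fs rule: rd.induct)
  case (1 a b xs)
  have "[0..<length (a # b # xs) - 1] = 0 # map Suc [0..<length (b#xs) - 1]"
    by (simp add: upt_conv_Cons map_Suc_upt del: upt_Suc)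
  then show ?case using 1 by (simp add: comp_def)
qed auto

lemma rd_append: "rd (xs @ ys) = rd xs @ (if xs = [] \<or> ys = [] then [] else [last xs \<inter> hd ys]) @ rd ys"
proof (induction xs rule: induct_list012)
  case (2 x)
  then show ?case by (cases ys) auto
qed auto

definition wk :: "'a set set \<Rightarrow> nat \<Rightarrow> 'a set list \<Rightarrow> bool" where
  "wk S d fs \<longleftrightarrow> fs \<noteq> [] \<and> set fs \<subseteq> S \<and> successively (\<lambda>a b. card (a \<inter> b) = d) fs"

definition pth :: "'a set set \<Rightarrow> nat \<Rightarrow> 'a set list \<Rightarrow> bool" where
  "pth S d fs \<longleftrightarrow> wk S d fs \<and> distinct (rd fs)"

lemma rd_map': "map (\<lambda>i. fs!i \<inter> fs!Suc i) [0..<length fs - Suc 0] = rd fs"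
  using rd_map by simp

lemma path_eq: "path X d fs = pth (facets X) d fs"
  unfolding path_def walk_def pth_def wk_def by (simp add: successively_conv_nth rd_map')

lemma walk_eq: "walk X d fs = wk (facets X) d fs"
  unfolding walk_def wk_def by (simp add: successively_conv_nth)

lemma rd_split: "rd fs = xs @ y # ys \<Longrightarrow> \<exists>A B. fs = A @ B \<and> A \<noteq> [] \<and> B \<noteq> [] \<and> y = last A \<inter> hd B \<and> rd B = ys"
proof (induction fs arbitrary: xs rule: rd.induct)
  case (1 a b zs)
  show ?case
  proof (cases xs)
    case Nil
    then show ?thesis using 1 by (intro exI[of _ "[a]"] exI[of _ "b#zs"]) auto
  next
    case (Cons x xs')
    then have "rd (b#zs) = xs' @ y # ys" using 1 by simp
    from 1(1)[OF this] obtain A B where "b # zs = A @ B" "A \<noteq> []" "B \<noteq> []" "y = last A \<inter> hd B" "rd B = ys" by blast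
    then show ?thesis by (intro exI[of _ "a#A"] exI[of _ B]) auto
  qed
qed auto

lemma card_facts:
  assumes "\<forall>F\<in>S. card F = Suc d" "a \<in> S" "b \<in> S" "a \<noteq> b" "y \<subseteq> a" "y \<subseteq> b" "card y = d"
  shows "card (a \<inter> b) = d" "a \<inter> b = y"
proof -
  have fa: "finite a" "finite b" using assms by (metis card.infinite nat.distinct(1))+
  have "a \<inter> b \<noteq> a"
  proof
    assume "a \<inter> b = a" then have "a \<subseteq> b" by blast
    then show False using card_subset_eq[OF fa(2)] assms by auto
  qed
  then have "card (a \<inter> b) < card a" using fa by (intro psubset_card_mono) auto
  moreover have "card y \<le> card (a \<inter> b)" using assms fa by (intro card_mono) auto
  ultimately show c: "card (a \<inter> b) = d" using assms by auto
  show "a \<inter> b = y" using card_subset_eq[of "a \<inter> b" y] fa assms c by auto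
qed

lemma walk_to_path:
  assumes cS: "\<forall>F\<in>S. card F = Suc d" and "wk S d fs"
  shows "\<exists>gs. pth S d gs \<and> hd gs = hd fs \<and> last gs = last fs"
  using assms(2)
proof (induction fs rule: length_induct)
  case (1 fs)
  show ?case
  proof (cases "distinct (rd fs)")
    case True then show ?thesis using 1 unfolding pth_def by blast
  next
    case False
    then obtain xs ys zs y where e: "rd fs = xs@[y]@ys@[y]@zs" using not_distinct_decomp by blast
    then obtain A B where AB: "fs = A @ B" "A \<noteq> []" "B \<noteq> []" "y = last A \<inter> hd B" "rd B = ys @ y # zs"
      using rd_split[of fs xs y "ys @ y # zs"] by auto
    obtain M C where MC: "B = M @ C" "M \<noteq> []" "C \<noteq> []" "y = last M \<inter> hd C"
      using rd_split[OF AB(5)] by blast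
    have w: "fs \<noteq> []" "set fs \<subseteq> S" "successively (\<lambda>a b. card (a \<inter> b) = d) fs"
      using 1(2) unfolding wk_def by auto
    have sA: "successively (\<lambda>a b. card (a \<inter> b) = d) A" and sC: "successively (\<lambda>a b. card (a \<inter> b) = d) C"
      and cy: "card y = d"
      using w(3) AB MC by (auto simp: successively_append_iff)
    have inS: "last A \<in> S" "hd C \<in> S" "set A \<subseteq> S" "set C \<subseteq> S" using w(2) AB MC by auto
    have yA: "y \<subseteq> last A" "y \<subseteq> hd C" using AB MC by auto
    show ?thesis
    proof (cases "last A = hd C")
      case True
      define gs where "gs = A @ tl C"
      have "successively (\<lambda>a b. card (a \<inter> b) = d) gs"
        using sA sC True MC(3) unfolding gs_def
        by (cases C) (auto simp: successively_append_iff successively_Cons)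
      then have "wk S d gs" using inS AB unfolding wk_def gs_def by (auto dest: list.set_sel(2)[OF MC(3)])
      moreover have "length gs < length fs" using AB MC unfolding gs_def by (cases M) auto
      moreover have "hd gs = hd fs" "last gs = last fs" using AB MC True unfolding gs_def
        by (cases C; auto)+
      ultimately show ?thesis using 1(1) by metis
    next
      case False
      define gs where "gs = A @ C"
      have "card (last A \<inter> hd C) = d" using card_facts(1)[OF cS inS(1,2) False yA cy] .
      then have "successively (\<lambda>a b. card (a \<inter> b) = d) gs"
        using sA sC MC(3) AB(2) unfolding gs_def by (auto simp: successively_append_iff)
      then have "wk S d gs" using inS AB unfolding wk_def gs_def by auto
      moreover have "length gs < length fs" using AB MC unfolding gs_def by auto
      moreover have "hd gs = hd fs" "last gs = last fs" using AB MC unfolding gs_def by auto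
      ultimately show ?thesis using 1(1) by metis
    qed
  qed
qed

definition U :: "'a set set \<Rightarrow> nat \<Rightarrow> bool" where
  "U S d \<longleftrightarrow> (\<forall>fs gs. pth S d fs \<longrightarrow> pth S d gs \<longrightarrow> hd fs = hd gs \<longrightarrow> last fs = last gs \<longrightarrow> fs = gs)"

lemma U_apply: "U S d \<Longrightarrow> pth S d fs \<Longrightarrow> pth S d gs \<Longrightarrow> hd fs = hd gs \<Longrightarrow> last fs = last gs \<Longrightarrow> fs = gs"
  unfolding U_def by blast

lemma pth_succ: "pth S d fs \<Longrightarrow> successively (\<lambda>a b. card (a \<inter> b) = d) fs"
  unfolding pth_def wk_def by blast

lemma pth_sub:
  assumes "pth S d (xs @ ys)"
  shows "xs \<noteq> [] \<Longrightarrow> pth S d xs" "ys \<noteq> [] \<Longrightarrow> pth S d ys"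
  using assms unfolding pth_def wk_def by (auto simp: rd_append successively_append_iff)

lemma pth_mono: "pth S d fs \<Longrightarrow> set fs \<subseteq> T \<Longrightarrow> pth T d fs"
  unfolding pth_def wk_def by auto

lemma rd_Cons: "B \<noteq> [] \<Longrightarrow> rd (q # B) = (q \<inter> hd B) # rd B"
  by (cases B) auto

lemma rd_snoc: "A \<noteq> [] \<Longrightarrow> rd (A @ [q]) = rd A @ [last A \<inter> q]"
  by (simp add: rd_append)

locale stepctx =
  fixes F :: "'a set" and S :: "'a set set" and d :: nat and v :: 'a
  assumes cS: "\<forall>G\<in>insert F S. card G = Suc d"
    and FS: "F \<notin> S" and vF: "v \<in> F" and vS: "v \<notin> \<Union>S"
begin

definition "r = F - {v}"

lemma cF: "card F = Suc d" using cS by simp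

lemma finF: "finite F" using cF card.infinite by fastforce

lemma card_r: "card r = d"
  unfolding r_def using cF vF by (simp add: card_Diff_singleton)

lemma adjF: assumes "a \<in> insert F S" "card (a \<inter> F) = d"
  shows "a \<in> S" "a \<inter> F = r" "F \<inter> a = r"
proof -
  have "a \<noteq> F" using assms(2) cF by auto
  then show aS: "a \<in> S" using assms(1) by simp
  have "a \<inter> F \<subseteq> r" using aS vS unfolding r_def by auto
  moreover have "finite r" unfolding r_def using finF by simp
  ultimately show "a \<inter> F = r" using card_subset_eq[of r "a \<inter> F"] card_r assms(2) by simp
  then show "F \<inter> a = r" by auto
qed

lemma adjF': assumes "a \<in> insert F S" "card (F \<inter> a) = d"
  shows "a \<in> S" "F \<inter> a = r"
proof -
  have "card (a \<inter> F) = d" using assms(2) by (simp add: Int_commute)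
  then show "a \<in> S" "F \<inter> a = r" using adjF[OF assms(1)] by auto
qed

lemma noloop: "\<not> pth (insert F S) d (F # B @ [F])"
proof
  assume p: "pth (insert F S) d (F # B @ [F])"
  show False
  proof (cases B)
    case Nil
    then show ?thesis using p cS unfolding pth_def wk_def by auto
  next
    case (Cons b B')
    have w: "successively (\<lambda>a b. card (a \<inter> b) = d) (F # B @ [F])" "set (F # B @ [F]) \<subseteq> insert F S"
      using p unfolding pth_def wk_def by auto
    have c: "card (F \<inter> hd B) = d" "card (last B \<inter> F) = d" using w(1) Cons
      by (auto simp: successively_append_iff successively_Cons)
    have sB: "set B \<subseteq> insert F S" using w(2) by simp
    have i: "hd B \<in> insert F S" "last B \<in> insert F S"
      using subsetD[OF sB hd_in_set] subsetD[OF sB last_in_set] Cons by auto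
    have "F \<inter> hd B = r" "last B \<inter> F = r" using adjF'(2)[OF i(1) c(1)] adjF(2)[OF i(2) c(2)] by auto
    moreover have "rd (F # B @ [F]) = (F \<inter> hd B) # rd B @ [last B \<inter> F]"
      using Cons rd_Cons[of "B @ [F]" F] rd_snoc[of B F] by simp
    ultimately show False using p unfolding pth_def by auto
  qed
qed

lemma nointerior: assumes "pth (insert F S) d (A @ F # B)" shows "A = [] \<or> B = []"
proof (rule ccontr)
  assume "\<not> (A = [] \<or> B = [])"
  then have ne: "A \<noteq> []" "B \<noteq> []" by auto
  have w: "successively (\<lambda>a b. card (a \<inter> b) = d) (A @ F # B)" "set (A @ F # B) \<subseteq> insert F S"
    using assms unfolding pth_def wk_def by auto
  have c: "card (last A \<inter> F) = d" "card (F \<inter> hd B) = d" using w(1) ne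
    by (auto simp: successively_append_iff successively_Cons)
  have sB: "set B \<subseteq> insert F S" "set A \<subseteq> insert F S" using w(2) by auto
  have i: "hd B \<in> insert F S" "last A \<in> insert F S"
    using subsetD[OF sB(1) hd_in_set] subsetD[OF sB(2) last_in_set] ne by auto
  have "F \<inter> hd B = r" "last A \<inter> F = r" using adjF'(2)[OF i(1) c(2)] adjF(2)[OF i(2) c(1)] by auto
  moreover have "rd (A @ F # B) = rd A @ [last A \<inter> F] @ [F \<inter> hd B] @ rd B"
    using ne by (simp add: rd_append rd_Cons del: rd.simps)
  ultimately show False using assms unfolding pth_def by auto
qed

lemma position:
  assumes p: "pth (insert F S) d fs" and "F \<in> set fs" "fs \<noteq> [F]"
  shows "(\<exists>B. fs = F # B \<and> B \<noteq> [] \<and> set B \<subseteq> S) \<or> (\<exists>A. fs = A @ [F] \<and> A \<noteq> [] \<and> set A \<subseteq> S)"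
proof -
  have sfs: "set fs \<subseteq> insert F S" using p unfolding pth_def wk_def by auto
  obtain A B where fs: "fs = A @ F # B" using assms(2) split_list by metis
  have "A = [] \<or> B = []" using nointerior p fs by blast
  then show ?thesis
  proof
    assume A: "A = []"
    then have Bne: "B \<noteq> []" using assms fs by auto
    have "F \<notin> set B"
    proof
      assume "F \<in> set B"
      then obtain B1 B2 where B: "B = B1 @ F # B2" using split_list by metis
      have "B2 = []" using nointerior[of "F # B1" B2] p fs A B by auto
      then show False using noloop[of B1] p fs A B by auto
    qed
    then show ?thesis using fs A Bne sfs by auto
  next
    assume B: "B = []"
    then have Ane: "A \<noteq> []" using assms fs by auto
    have "F \<notin> set A"
    proof
      assume "F \<in> set A"
      then obtain A1 A2 where A: "A = A1 @ F # A2" using split_list by metis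
      have "A1 = []" using nointerior[of A1 "A2 @ [F]"] p fs A B by auto
      then show False using noloop[of A2] p fs A B by auto
    qed
    then show ?thesis using fs B Ane sfs by auto
  qed
qed

lemma pos_hd_last: assumes p: "pth (insert F S) d fs" and "hd fs = F" "last fs = F" shows "fs = [F]"
proof (rule ccontr)
  assume ne: "fs \<noteq> [F]"
  have nef: "fs \<noteq> []" using p unfolding pth_def wk_def by auto
  have "F \<in> set fs" using hd_in_set[OF nef] assms by simp
  from position[OF p this ne] show False
  proof
    assume "\<exists>B. fs = F # B \<and> B \<noteq> [] \<and> set B \<subseteq> S"
    then obtain B where B: "fs = F # B" "B \<noteq> []" "set B \<subseteq> S" by blast
    have "last B \<in> S" using last_in_set[OF B(2)] B(3) by blast
    moreover have "last fs = last B" using B by simp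
    ultimately show False using assms FS by simp
  next
    assume "\<exists>A. fs = A @ [F] \<and> A \<noteq> [] \<and> set A \<subseteq> S"
    then obtain A where A: "fs = A @ [F]" "A \<noteq> []" "set A \<subseteq> S" by blast
    have "hd A \<in> S" using hd_in_set[OF A(2)] A(3) by blast
    moreover have "hd fs = hd A" using A by simp
    ultimately show False using assms FS by simp
  qed
qed

lemma pos_hd: assumes p: "pth (insert F S) d fs" and "hd fs = F" "last fs \<noteq> F"
  shows "\<exists>B. fs = F # B \<and> B \<noteq> [] \<and> set B \<subseteq> S"
proof -
  have nef: "fs \<noteq> []" using p unfolding pth_def wk_def by auto
  have ne: "fs \<noteq> [F]"
  proof
    assume "fs = [F]" then show False using assms(2,3) by simp
  qed
  have "F \<in> set fs" using hd_in_set[OF nef] assms by simp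
  from position[OF p this ne] show ?thesis
  proof
    assume "\<exists>A. fs = A @ [F] \<and> A \<noteq> [] \<and> set A \<subseteq> S"
    then obtain A where A: "fs = A @ [F]" "A \<noteq> []" "set A \<subseteq> S" by blast
    then show ?thesis using assms by simp
  qed
qed

lemma pos_last: assumes p: "pth (insert F S) d fs" and "hd fs \<noteq> F" "last fs = F"
  shows "\<exists>A. fs = A @ [F] \<and> A \<noteq> [] \<and> set A \<subseteq> S"
proof -
  have nef: "fs \<noteq> []" using p unfolding pth_def wk_def by auto
  have ne: "fs \<noteq> [F]"
  proof
    assume "fs = [F]" then show False using assms(2,3) by simp
  qed
  have "F \<in> set fs" using last_in_set[OF nef] assms by simp
  from position[OF p this ne] show ?thesis
  proof
    assume "\<exists>B. fs = F # B \<and> B \<noteq> [] \<and> set B \<subseteq> S"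
    then obtain B where "fs = F # B" by blast
    then show ?thesis using assms by simp
  qed
qed

lemma pos_none: assumes p: "pth (insert F S) d fs" and "hd fs \<noteq> F" "last fs \<noteq> F"
  shows "set fs \<subseteq> S"
proof -
  have sfs: "set fs \<subseteq> insert F S" using p unfolding pth_def wk_def by auto
  have "F \<notin> set fs"
  proof
    assume i: "F \<in> set fs"
    have ne: "fs \<noteq> [F]"
  proof
    assume "fs = [F]" then show False using assms(2,3) by simp
  qed
    from position[OF p i ne] show False using assms by auto
  qed
  then show ?thesis using sfs by auto
qed

lemma uniq_step: assumes "U S d" shows "U (insert F S) d"
  unfolding U_def
proof (intro allI impI)
  fix fs gs assume pf: "pth (insert F S) d fs" and pg: "pth (insert F S) d gs"
    and h: "hd fs = hd gs" and l: "last fs = last gs"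
  show "fs = gs"
  proof (cases "hd fs = F")
    case hF: True
    show ?thesis
    proof (cases "last fs = F")
      case True
      then show ?thesis using pos_hd_last[OF pf] pos_hd_last[OF pg] hF h l by simp
    next
      case lF: False
      obtain B where B: "fs = F # B" "B \<noteq> []" "set B \<subseteq> S" using pos_hd[OF pf hF lF] by blast
      obtain C where C: "gs = F # C" "C \<noteq> []" "set C \<subseteq> S" using pos_hd[OF pg] hF lF h l by auto
      have pB: "pth S d B" using pth_sub(2)[of "insert F S" d "[F]" B] pf B pth_mono by auto
      have pC: "pth S d C" using pth_sub(2)[of "insert F S" d "[F]" C] pg C pth_mono by auto
      have lBC: "last B = last C" using l B C by auto
      have cB: "card (F \<inter> hd B) = d" "card (F \<inter> hd C) = d"
        using successively_Cons[THEN iffD1, OF pth_succ[OF pf, unfolded B(1)]]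
          successively_Cons[THEN iffD1, OF pth_succ[OF pg, unfolded C(1)]] B(2) C(2) by blast+
      have inS0: "hd C \<in> insert F S" "hd B \<in> insert F S" using B C hd_in_set by blast+
      have rB: "F \<inter> hd B = r" "F \<inter> hd C = r" using adjF'(2)[OF inS0(2) cB(1)] adjF'(2)[OF inS0(1) cB(2)] by simp_all
      have rdf: "rd fs = r # rd B" "rd gs = r # rd C" using B C rB by (auto simp: rd_Cons)
      have nr: "r \<notin> set (rd B)" using pf rdf unfolding pth_def by auto
      show ?thesis
      proof (cases "hd B = hd C")
        case True
        then have "B = C" using U_apply[OF assms pB pC _ lBC] by simp
        then show ?thesis using B C by simp
      next
        case False
        have ne: "hd C \<noteq> hd B" using False by simp
        have sub: "r \<subseteq> hd C" "r \<subseteq> hd B" using rB by blast+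
        have qp: "card (hd C \<inter> hd B) = d" "hd C \<inter> hd B = r"
          using card_facts[OF cS inS0 ne sub card_r] by simp_all
        have "successively (\<lambda>a b. card (a \<inter> b) = d) B" using pB unfolding pth_def wk_def by auto
        then have "pth S d (hd C # B)" using pB qp nr B C hd_in_set[OF C(2)]
          unfolding pth_def wk_def by (auto simp: successively_Cons rd_Cons)
        then have "hd C # B = C" using U_apply[OF assms _ pC _ ] lBC C(2) by (simp add: last_ConsR B(2))
        then have "rd gs = r # r # rd B" using rdf qp B by (metis rd_Cons)
        then show ?thesis using pg unfolding pth_def by auto
      qed
    qed
  next
    case hF: False
    show ?thesis
    proof (cases "last fs = F")
      case lF: True
      obtain A where A: "fs = A @ [F]" "A \<noteq> []" "set A \<subseteq> S" using pos_last[OF pf hF lF] by blast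
      obtain C where C: "gs = C @ [F]" "C \<noteq> []" "set C \<subseteq> S" using pos_last[OF pg] hF lF h l by auto
      have pA: "pth S d A" using pth_sub(1)[of "insert F S" d A "[F]"] pf A pth_mono by auto
      have pC: "pth S d C" using pth_sub(1)[of "insert F S" d C "[F]"] pg C pth_mono by auto
      have hAC: "hd A = hd C" using h A C by auto
      have cA: "card (last A \<inter> F) = d" "card (last C \<inter> F) = d"
        using successively_append_iff[THEN iffD1, OF pth_succ[OF pf, unfolded A(1)]]
          successively_append_iff[THEN iffD1, OF pth_succ[OF pg, unfolded C(1)]] A(2) C(2) by auto
      have inS: "last A \<in> insert F S" "last C \<in> insert F S" using A C last_in_set by blast+
      have rA: "last A \<inter> F = r" "last C \<inter> F = r" using adjF(2)[OF inS(1) cA(1)] adjF(2)[OF inS(2) cA(2)] by simp_all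
      have rdf: "rd fs = rd A @ [r]" "rd gs = rd C @ [r]" using A C rA by (auto simp: rd_snoc)
      have nr: "r \<notin> set (rd A)" using pf rdf unfolding pth_def by auto
      show ?thesis
      proof (cases "last A = last C")
        case True
        then have "A = C" using U_apply[OF assms pA pC hAC] by simp
        then show ?thesis using A C by simp
      next
        case False
        have sub: "r \<subseteq> last A" "r \<subseteq> last C" using rA by blast+
        have qp: "card (last A \<inter> last C) = d" "last A \<inter> last C = r"
          using card_facts[OF cS inS False sub card_r] by simp_all
        have "successively (\<lambda>a b. card (a \<inter> b) = d) A" using pA unfolding pth_def wk_def by auto
        then have "pth S d (A @ [last C])" using pA qp nr A C last_in_set[OF C(2)]
          unfolding pth_def wk_def by (auto simp: successively_append_iff rd_snoc)
        then have "A @ [last C] = C" using U_apply[OF assms _ pC] hAC A(2) by simp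
        then have "rd gs = rd A @ [r, r]" using rdf qp A rd_snoc by (metis append.assoc append_Cons append_Nil)
        then show ?thesis using pg unfolding pth_def by auto
      qed
    next
      case lF: False
      have "set gs \<subseteq> S" using pos_none[OF pg] hF lF h l by simp
      then have "pth S d fs" "pth S d gs" using pth_mono[OF pf pos_none[OF pf hF lF]] pth_mono[OF pg] by auto
      then show ?thesis using U_apply[OF assms _ _ h l] by simp
    qed
  qed
qed

end

lemma diff_single: "A - B = {v} \<Longrightarrow> v \<in> A \<and> v \<notin> B"
  by (metis Diff_iff insertI1)

lemma diff_single_un: "A - B = {v} \<Longrightarrow> A \<union> B = insert v B"
  by blast

lemma take_Suc_set: "m < length Fs \<Longrightarrow> set (take (Suc m) Fs) = insert (Fs!m) (set (take m Fs))"
  by (simp add: take_Suc_conv_app_nth)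

lemma nth_notin_take: assumes "distinct Fs" "m < length Fs" shows "Fs!m \<notin> set (take m Fs)"
proof
  assume "Fs!m \<in> set (take m Fs)"
  then obtain i where i: "i < length (take m Fs)" "take m Fs ! i = Fs ! m" by (auto simp: in_set_conv_nth)
  then have "i < m" "Fs ! i = Fs ! m" by auto
  then show False using assms nth_eq_iff_index_eq[of Fs i m] by auto
qed

definition stk :: "'a set list \<Rightarrow> bool" where
  "stk Fs \<longleftrightarrow> (\<forall>p. 0 < p \<and> p < length Fs \<longrightarrow>
        (\<exists>v. Fs ! p - \<Union>(set (take p Fs)) = {v} \<and> (\<exists>j<p. Fs ! p - {v} \<subseteq> Fs ! j)))"

lemma wk_mono: "wk S d fs \<Longrightarrow> S \<subseteq> T \<Longrightarrow> wk T d fs"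
  unfolding wk_def by auto

locale stkctx =
  fixes Fs :: "'a set list" and d :: nat
  assumes cFs: "\<forall>G\<in>set Fs. card G = Suc d" and dist: "distinct Fs" and nFs: "Fs \<noteq> []" and st: "stk Fs"
begin

lemma free_v: assumes "m < length Fs" "0 < m"
  obtains v j where "Fs ! m - \<Union>(set (take m Fs)) = {v}" "j < m" "Fs ! m - {v} \<subseteq> Fs ! j"
  using st assms unfolding stk_def by blast

lemma U_take: "m \<le> length Fs \<Longrightarrow> U (set (take m Fs)) d"
proof (induction m)
  case 0
  then show ?case unfolding U_def pth_def wk_def by auto
next
  case (Suc m)
  then have ml: "m < length Fs" by simp
  define F where "F = Fs ! m"
  define S where "S = set (take m Fs)"
  have FinFs: "F \<in> set Fs" unfolding F_def using ml by simp
  have cF: "card F = Suc d" using cFs FinFs by blast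
  obtain v where v: "v \<in> F" "v \<notin> \<Union>S"
  proof (cases "m = 0")
    case True
    have "F \<noteq> {}" using cF by auto
    then obtain v where "v \<in> F" by blast
    then show ?thesis using that True unfolding S_def by simp
  next
    case False
    then obtain v j where "Fs ! m - \<Union>(set (take m Fs)) = {v}" using free_v[OF ml] False by (metis neq0_conv)
    from diff_single[OF this] show ?thesis using that[of v] unfolding F_def S_def by simp
  qed
  have ctx: "stepctx F S d v"
  proof
    have "insert F S \<subseteq> set Fs" unfolding S_def using FinFs set_take_subset[of m Fs] by simp
    then show "\<forall>G\<in>insert F S. card G = Suc d" using cFs by blast
    show "F \<notin> S" unfolding F_def S_def using nth_notin_take[OF dist ml] .
    show "v \<in> F" "v \<notin> \<Union>S" using v by auto
  qed
  have "U (insert F S) d" using stepctx.uniq_step[OF ctx] Suc ml by (simp add: S_def)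
  then show ?case using take_Suc_set[OF ml] unfolding F_def S_def by simp
qed

lemma card_take: "0 < m \<Longrightarrow> m \<le> length Fs \<Longrightarrow> card (\<Union>(set (take m Fs))) = d + m \<and> finite (\<Union>(set (take m Fs)))"
proof (induction m)
  case 0
  then show ?case by simp
next
  case (Suc m)
  then have ml: "m < length Fs" by simp
  define F where "F = Fs ! m"
  define S where "S = set (take m Fs)"
  have FinFs: "F \<in> set Fs" unfolding F_def using ml by simp
  have cF: "card F = Suc d" using cFs FinFs by blast
  have fF: "finite F" using cF card.infinite by fastforce
  have eq: "set (take (Suc m) Fs) = insert F S" using take_Suc_set[OF ml] unfolding F_def S_def by simp
  show ?case
  proof (cases "m = 0")
    case True
    then have "S = {}" unfolding S_def by simp
    then show ?thesis using eq cF fF True by simp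
  next
    case False
    obtain v j where v: "Fs ! m - \<Union>(set (take m Fs)) = {v}" using free_v[OF ml] False by (metis neq0_conv)
    have IH: "card (\<Union>S) = d + m" "finite (\<Union>S)" using Suc False ml unfolding S_def by auto
    have "\<Union>(insert F S) = insert v (\<Union>S)" using diff_single_un[OF v] unfolding F_def S_def by simp
    moreover have "v \<notin> \<Union>S" using diff_single[OF v] unfolding S_def by simp
    ultimately show ?thesis using eq IH by simp
  qed
qed

lemma walk_take: "0 < m \<Longrightarrow> m \<le> length Fs \<Longrightarrow> \<forall>f\<in>set (take m Fs). \<forall>f'\<in>set (take m Fs).
    \<exists>ws. wk (set (take m Fs)) d ws \<and> hd ws = f \<and> last ws = f'"
proof (induction m)
  case 0
  then show ?case by simp
next
  case (Suc m)
  then have ml: "m < length Fs" by simp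
  define F where "F = Fs ! m"
  define S where "S = set (take m Fs)"
  have FinFs: "F \<in> set Fs" unfolding F_def using ml by simp
  have eq: "set (take (Suc m) Fs) = insert F S" using take_Suc_set[OF ml] unfolding F_def S_def by simp
  show ?case
  proof (cases "m = 0")
    case True
    then have "S = {}" unfolding S_def by simp
    then have "set (take (Suc m) Fs) = {F}" using eq by simp
    moreover have "wk {F} d [F]" unfolding wk_def by simp
    ultimately show ?thesis by fastforce
  next
    case False
    obtain v j where v: "Fs ! m - \<Union>(set (take m Fs)) = {v}" "j < m" "Fs ! m - {v} \<subseteq> Fs ! j"
      using free_v[OF ml] False by (metis neq0_conv)
    define G where "G = Fs ! j"
    have GS: "G \<in> S" unfolding G_def S_def using v(2) ml by (simp add: in_set_conv_nth) (metis length_take min.absorb4 nth_take v(2) ml min_less_iff_conj)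
    have vG: "v \<notin> G" using diff_single[OF v(1)] GS unfolding S_def by auto
    have vF: "v \<in> F" using diff_single[OF v(1)] unfolding F_def by auto
    have GF: "G \<inter> F = F - {v}" using v(3) vG unfolding F_def G_def by auto
    have cF: "card F = Suc d" using cFs FinFs by blast
    have c1: "card (G \<inter> F) = d" unfolding GF using cF vF by (simp add: card_Diff_singleton)
    have cGF: "card (G \<inter> F) = d" "card (F \<inter> G) = d" using c1 by (simp_all add: Int_commute)
    have m0: "0 < m" "m \<le> length Fs" using False ml by auto
    have IH: "\<forall>f\<in>S. \<forall>f'\<in>S. \<exists>ws. wk S d ws \<and> hd ws = f \<and> last ws = f'"
      using Suc.IH[OF m0] unfolding S_def .
    have sub: "S \<subseteq> insert F S" by auto
    have FF: "wk (insert F S) d [F]" unfolding wk_def by simp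
    have toF: "\<exists>ws. wk (insert F S) d ws \<and> hd ws = f \<and> last ws = F" if fS: "f \<in> S" for f
    proof -
      obtain ws where ws: "wk S d ws" "hd ws = f" "last ws = G" using IH[rule_format, OF fS GS] by blast
      have "wk (insert F S) d (ws @ [F])" using ws cGF unfolding wk_def by (auto simp: successively_append_iff)
      then show ?thesis using ws by (intro exI[of _ "ws @ [F]"]) (auto simp: wk_def)
    qed
    have fromF: "\<exists>ws. wk (insert F S) d ws \<and> hd ws = F \<and> last ws = f" if fS: "f \<in> S" for f
    proof -
      obtain ws where ws: "wk S d ws" "hd ws = G" "last ws = f" using IH[rule_format, OF GS fS] by blast
      have "wk (insert F S) d (F # ws)" using ws cGF unfolding wk_def by (auto simp: successively_Cons)
      then show ?thesis using ws by (intro exI[of _ "F # ws"]) (auto simp: wk_def)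
    qed
    have "\<forall>f\<in>insert F S. \<forall>f'\<in>insert F S. \<exists>ws. wk (insert F S) d ws \<and> hd ws = f \<and> last ws = f'"
    proof (intro ballI)
      fix f f' assume "f \<in> insert F S" "f' \<in> insert F S"
      then consider "f = F" "f' = F" | "f = F" "f' \<in> S" | "f \<in> S" "f' = F" | "f \<in> S" "f' \<in> S" by blast
      then show "\<exists>ws. wk (insert F S) d ws \<and> hd ws = f \<and> last ws = f'"
      proof cases
        case 1 then show ?thesis using FF by (intro exI[of _ "[F]"]) simp
      next
        case 2 then show ?thesis using fromF by blast
      next
        case 3 then show ?thesis using toF by blast
      next
        case 4
        then obtain ws where "wk S d ws" "hd ws = f" "last ws = f'" using IH[rule_format, OF 4] by blast
        then show ?thesis using wk_mono[OF _ sub] by blast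
      qed
    qed
    then show ?thesis using eq by simp
  qed
qed

end

lemma facets_props:
  assumes "simplicial_complex V X"
  shows "finite (facets X)" "V = \<Union>(facets X)"
proof -
  have fV: "finite V" and XV: "\<forall>F\<in>X. F \<subseteq> V" and cov: "\<forall>x\<in>V. \<exists>F\<in>X. x \<in> F"
    using assms unfolding simplicial_complex_def by auto
  have "X \<subseteq> Pow V" using XV by auto
  then have fX: "finite X" using fV finite_subset by blast
  have "facets X \<subseteq> X" unfolding facets_def by auto
  then show "finite (facets X)" using fX finite_subset by blast
  show "V = \<Union>(facets X)"
  proof
    show "\<Union>(facets X) \<subseteq> V" using XV \<open>facets X \<subseteq> X\<close> by auto
    show "V \<subseteq> \<Union>(facets X)"
    proof
      fix x assume "x \<in> V"
      then obtain F where F: "F \<in> X" "x \<in> F" using cov by blast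
      obtain m where m: "m \<in> X" "F \<le> m" "\<forall>b\<in>X. m \<le> b \<longrightarrow> m = b"
        using finite_has_maximal2[OF fX F(1)] by blast
      have "m \<in> facets X" unfolding facets_def using m by auto
      then show "x \<in> \<Union>(facets X)" using m F by auto
    qed
  qed
qed

lemma cross: "fs \<noteq> [] \<Longrightarrow> hd fs \<in> T \<Longrightarrow> last fs \<notin> T \<Longrightarrow>
   \<exists>A B. fs = A @ B \<and> A \<noteq> [] \<and> B \<noteq> [] \<and> last A \<in> T \<and> hd B \<notin> T"
proof (induction fs)
  case Nil then show ?case by simp
next
  case (Cons a fs)
  show ?case
  proof (cases "fs = []")
    case True then show ?thesis using Cons by simp
  next
    case False
    show ?thesis
    proof (cases "hd fs \<in> T")
      case True
      then obtain A B where "fs = A @ B" "A \<noteq> []" "B \<noteq> []" "last A \<in> T" "hd B \<notin> T"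
        using Cons False by auto
      then show ?thesis by (intro exI[of _ "a # A"] exI[of _ B]) auto
    next
      case nT: False
      show ?thesis using Cons False nT by (intro exI[of _ "[a]"] exI[of _ fs]) auto
    qed
  qed
qed

lemma build:
  assumes fS: "finite S" and F0: "F0 \<in> S"
    and conn: "\<forall>f\<in>S. \<forall>f'\<in>S. \<exists>ws. wk S d ws \<and> hd ws = f \<and> last ws = f'"
  shows "k \<le> card S \<Longrightarrow> 0 < k \<Longrightarrow> \<exists>Fs. length Fs = k \<and> distinct Fs \<and> set Fs \<subseteq> S \<and> Fs!0 = F0 \<and>
      (\<forall>p. 0 < p \<and> p < k \<longrightarrow> (\<exists>j<p. card (Fs!p \<inter> Fs!j) = d))"
proof (induction k)
  case 0 then show ?case by simp
next
  case (Suc k)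
  show ?case
  proof (cases "k = 0")
    case True
    then show ?thesis using F0 by (intro exI[of _ "[F0]"]) auto
  next
    case False
    then obtain Fs where Fs: "length Fs = k" "distinct Fs" "set Fs \<subseteq> S" "Fs!0 = F0"
      "\<forall>p. 0 < p \<and> p < k \<longrightarrow> (\<exists>j<p. card (Fs!p \<inter> Fs!j) = d)"
      using Suc by auto
    have "card (set Fs) = k" using Fs distinct_card by metis
    then have "set Fs \<noteq> S" using Suc.prems by auto
    then obtain g where g: "g \<in> S" "g \<notin> set Fs" using Fs(3) by blast
    obtain ws where ws: "wk S d ws" "hd ws = F0" "last ws = g" using conn F0 g(1) by blast
    have F0in: "F0 \<in> set Fs" using Fs(1,4) False by (metis nth_mem neq0_conv)
    have nws: "ws \<noteq> []" using ws unfolding wk_def by simp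
    obtain A B where AB: "ws = A @ B" "A \<noteq> []" "B \<noteq> []" "last A \<in> set Fs" "hd B \<notin> set Fs"
      using cross[OF nws, of "set Fs"] ws F0in g by auto
    have sws: "successively (\<lambda>a b. card (a \<inter> b) = d) ws" "set ws \<subseteq> S" using ws unfolding wk_def by auto
    have cab: "card (last A \<inter> hd B) = d" using sws(1) AB by (simp add: successively_append_iff)
    have bS: "hd B \<in> S" using sws(2) AB hd_in_set[OF AB(3)] by auto
    obtain j where j: "j < k" "Fs ! j = last A" using AB(4) Fs(1) by (metis in_set_conv_nth)
    define Gs where "Gs = Fs @ [hd B]"
    have "length Gs = Suc k" "distinct Gs" "set Gs \<subseteq> S" "Gs!0 = F0"
      using Fs AB bS False unfolding Gs_def by (auto simp: nth_append)
    moreover have "\<forall>p. 0 < p \<and> p < Suc k \<longrightarrow> (\<exists>j<p. card (Gs!p \<inter> Gs!j) = d)"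
    proof (intro allI impI)
      fix p assume p: "0 < p \<and> p < Suc k"
      show "\<exists>j<p. card (Gs!p \<inter> Gs!j) = d"
      proof (cases "p < k")
        case True
        then obtain i where "i < p" "card (Fs!p \<inter> Fs!i) = d" using Fs(5) p by blast
        then show ?thesis using True Fs(1) unfolding Gs_def by (intro exI[of _ i]) (auto simp: nth_append)
      next
        case False
        then have "p = k" using p by simp
        then show ?thesis using j Fs(1) cab unfolding Gs_def by (intro exI[of _ j]) (auto simp: nth_append Int_commute)
      qed
    qed
    ultimately show ?thesis by blast
  qed
qed

definition un :: "'a set list \<Rightarrow> nat \<Rightarrow> 'a set" where "un Fs p = \<Union>(set (take p Fs))"

lemma un_Suc: "p < length Fs \<Longrightarrow> un Fs (Suc p) = un Fs p \<union> (Fs!p - un Fs p)"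
  unfolding un_def using take_Suc_set[of p Fs] by auto

lemma stack_from_count:
  assumes cS: "\<forall>G\<in>set Fs. card G = Suc d" and n0: "0 < length Fs"
    and adj: "\<forall>p. 0 < p \<and> p < length Fs \<longrightarrow> (\<exists>j<p. card (Fs!p \<inter> Fs!j) = d)"
    and cV: "card (\<Union>(set Fs)) = length Fs + d"
  shows "stk Fs"
proof -
  define n where "n = length Fs"
  have fin: "finite G" if "G \<in> set Fs" for G using cS that card.infinite by fastforce
  have finun: "finite (un Fs p)" for p unfolding un_def using fin set_take_subset[of p Fs] by auto
  have cardSuc: "card (un Fs (Suc p)) = card (un Fs p) + card (Fs!p - un Fs p)" if "p < n" for p
  proof -
    have "Fs!p \<in> set Fs" using that n_def by simp
    then have "finite (Fs!p - un Fs p)" using fin by simp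
    then have "card (un Fs p \<union> (Fs!p - un Fs p)) = card (un Fs p) + card (Fs!p - un Fs p)"
      using finun[of p] by (intro card_Un_disjoint) auto
    moreover have e: "un Fs (Suc p) = un Fs p \<union> (Fs!p - un Fs p)" using un_Suc[of p Fs] that unfolding n_def .
    ultimately show ?thesis by (simp only: e)
  qed
  have jsub: "Fs!j \<subseteq> un Fs p" if "j < p" "p < n" for j p
  proof -
    have "Fs!j \<in> set (take p Fs)" using that n_def by (auto simp: in_set_conv_nth intro!: exI[of _ j])
    then show ?thesis unfolding un_def by auto
  qed
  have tle: "card (Fs!p - un Fs p) \<le> 1" if "0 < p" "p < n" for p
  proof -
    have pl: "0 < p \<and> p < length Fs" using that n_def by simp
    obtain j where j: "j < p" "card (Fs!p \<inter> Fs!j) = d" using adj pl by blast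
    have pin: "Fs!p \<in> set Fs" using pl by simp
    have fp: "finite (Fs!p)" "card (Fs!p) = Suc d" using fin[OF pin] cS pin by auto
    have "Fs!p - un Fs p \<subseteq> Fs!p - Fs!j" using jsub[OF j(1) that(2)] by auto
    moreover have "card (Fs!p - Fs!j) = 1" using fp j(2) by (simp add: card_Diff_subset_Int)
    ultimately show ?thesis using fp by (metis card_mono finite_Diff)
  qed
  have c1: "card (un Fs 1) = Suc d" using cS n0 unfolding un_def by (cases Fs) auto
  have grow: "card (un Fs b) \<le> card (un Fs a) + (b - a)" if "1 \<le> a" "a \<le> b" "b \<le> n" for a b
    using that
  proof (induction b)
    case 0 then show ?case by simp
  next
    case (Suc b)
    show ?case
    proof (cases "a = Suc b")
      case True then show ?thesis by simp
    next
      case False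
      then have "a \<le> b" "b < n" "0 < b" using Suc.prems by auto
      then show ?thesis using Suc.IH[of] Suc.prems cardSuc[of b] tle[of b] by fastforce
    qed
  qed
  have unn: "un Fs n = \<Union>(set Fs)" unfolding un_def n_def by simp
  have t1: "card (Fs!p - un Fs p) = 1" if p: "0 < p" "p < n" for p
  proof (rule ccontr)
    assume "card (Fs!p - un Fs p) \<noteq> 1"
    then have t0: "card (Fs!p - un Fs p) = 0" using tle[OF p] by simp
    have "card (un Fs p) \<le> card (un Fs 1) + (p - 1)" using grow[of 1 p] p by auto
    then have "card (un Fs (Suc p)) \<le> d + p" using cardSuc[OF p(2)] t0 c1 p by simp
    moreover have "card (un Fs n) \<le> card (un Fs (Suc p)) + (n - Suc p)" using grow[of "Suc p" n] p by simp
    ultimately have "card (un Fs n) \<le> d + n - 1" using p by simp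
    then show False using cV unn n_def p by simp
  qed
  show ?thesis unfolding stk_def
  proof (intro allI impI)
    fix p assume p: "0 < p \<and> p < length Fs"
    then have pn: "0 < p" "p < n" using n_def by auto
    obtain v where v: "Fs!p - un Fs p = {v}" using t1[OF pn] card_1_singletonE by blast
    obtain j where j: "j < p" "card (Fs!p \<inter> Fs!j) = d" using adj p by blast
    have pin: "Fs!p \<in> set Fs" using p by simp
    have fp: "finite (Fs!p)" "card (Fs!p) = Suc d" using fin[OF pin] cS pin by auto
    have vin: "v \<in> Fs!p" "v \<notin> un Fs p" using v by auto
    have "Fs!p \<inter> Fs!j \<subseteq> Fs!p - {v}" using jsub[OF j(1) pn(2)] vin by auto
    moreover have "card (Fs!p - {v}) = d" using fp vin by (simp add: card_Diff_singleton)
    ultimately have "Fs!p \<inter> Fs!j = Fs!p - {v}" using card_subset_eq[of "Fs!p - {v}" "Fs!p \<inter> Fs!j"] fp j(2) by simp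
    then have "Fs!p - {v} \<subseteq> Fs!j" by auto
    then show "\<exists>v. Fs ! p - \<Union>(set (take p Fs)) = {v} \<and> (\<exists>j<p. Fs ! p - {v} \<subseteq> Fs ! j)"
      using v j(1) unfolding un_def by blast
  qed
qed


theorem proposition2p6:
  fixes V :: "'a set" and X :: "'a set set" and d n :: nat
  assumes "simplicial_complex V X"
    and "pure X d"
    and "n = card (facets X)"
    and "n \<ge> 1"
  shows "stacked X \<longleftrightarrow>
           card V = n + d \<and>
           (\<forall>f\<in>facets X. \<forall>f'\<in>facets X. \<exists>!fs. path_from X d fs f f')"
proof -
  define S where "S = facets X"
  have fS: "finite S" and VS: "V = \<Union>S" using facets_props[OF assms(1)] unfolding S_def by auto
  have cS: "\<forall>G\<in>S. card G = Suc d" using assms(2) unfolding pure_def S_def by simp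
  have pf: "path_from X d fs f f' \<longleftrightarrow> pth S d fs \<and> hd fs = f \<and> last fs = f'" for fs f f'
    unfolding path_from_def path_eq S_def ..
  show ?thesis
  proof
    assume "stacked X"
    then obtain Fs where so: "stacking_order X Fs" unfolding stacked_def by blast
    have Fs: "Fs \<noteq> []" "distinct Fs" "set Fs = S" "stk Fs"
      using so unfolding stacking_order_def stk_def S_def by auto
    have ctx: "stkctx Fs d" using Fs cS by unfold_locales auto
    have len: "n = length Fs" using assms(3) Fs distinct_card unfolding S_def by metis
    have l0: "0 < length Fs" "length Fs \<le> length Fs" using Fs by auto
    have "card (\<Union>(set (take (length Fs) Fs))) = d + length Fs"
      using stkctx.card_take[OF ctx l0] by simp
    then have cV: "card V = n + d" using VS Fs len by simp
    have W: "\<forall>f\<in>S. \<forall>f'\<in>S. \<exists>ws. wk S d ws \<and> hd ws = f \<and> last ws = f'"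
      using stkctx.walk_take[OF ctx l0] Fs by simp
    have UU: "U S d" using stkctx.U_take[OF ctx l0(2)] Fs by simp
    have "\<forall>f\<in>facets X. \<forall>f'\<in>facets X. \<exists>!fs. path_from X d fs f f'"
    proof (intro ballI)
      fix f f' assume ff: "f \<in> facets X" "f' \<in> facets X"
      obtain ws where ws: "wk S d ws" "hd ws = f" "last ws = f'" using W ff unfolding S_def by blast
      obtain gs where gs: "pth S d gs" "hd gs = f" "last gs = f'" using walk_to_path[OF cS ws(1)] ws by auto
      show "\<exists>!fs. path_from X d fs f f'"
      proof (rule ex_ex1I)
        show "\<exists>fs. path_from X d fs f f'" using gs pf by blast
        fix x y assume "path_from X d x f f'" "path_from X d y f f'"
        then show "x = y" using U_apply[OF UU] pf by metis
      qed
    qed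
    then show "card V = n + d \<and> (\<forall>f\<in>facets X. \<forall>f'\<in>facets X. \<exists>!fs. path_from X d fs f f')"
      using cV by blast
  next
    assume R: "card V = n + d \<and> (\<forall>f\<in>facets X. \<forall>f'\<in>facets X. \<exists>!fs. path_from X d fs f f')"
    have W: "\<forall>f\<in>S. \<forall>f'\<in>S. \<exists>ws. wk S d ws \<and> hd ws = f \<and> last ws = f'"
    proof (intro ballI)
      fix f f' assume "f \<in> S" "f' \<in> S"
      then obtain fs where "path_from X d fs f f'" using R unfolding S_def by blast
      then show "\<exists>ws. wk S d ws \<and> hd ws = f \<and> last ws = f'" using pf unfolding pth_def by blast
    qed
    have nS: "card S = n" using assms(3) unfolding S_def by simp
    then have "S \<noteq> {}" using assms(4) by auto
    then obtain F0 where F0: "F0 \<in> S" by blast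
    obtain Fs where Fs: "length Fs = n" "distinct Fs" "set Fs \<subseteq> S" "Fs!0 = F0"
      "\<forall>p. 0 < p \<and> p < n \<longrightarrow> (\<exists>j<p. card (Fs!p \<inter> Fs!j) = d)"
      using build[OF fS F0 W, of n] nS assms(4) by auto
    have sF: "set Fs = S" using card_subset_eq[OF fS Fs(3)] Fs(1,2) nS distinct_card by metis
    have cF: "\<forall>G\<in>set Fs. card G = Suc d" using cS sF by simp
    have "card (\<Union>(set Fs)) = length Fs + d" using R VS sF Fs(1) by simp
    then have "stk Fs" using stack_from_count[OF cF] Fs(1,5) assms(4) by simp
    moreover have "Fs \<noteq> []" using Fs(1) assms(4) by auto
    ultimately have "stacking_order X Fs" unfolding stacking_order_def stk_def using Fs(2) sF S_def by simp
    then show "stacked X" unfolding stacked_def using assms(2) by blast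
  qed
qed

end
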